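(* Let $Z=\ell_2$ with canonical basis $(e_n)$ and coordinate functionals $(e_n^* )$, let $\theta:\mathbb{R}\to[0,\infty)$ be $\theta(t)=0$ for $t\le0$, $\theta(t)=t^2$ for $t\ge0$, and define $f:Z\to[0,\infty)$ by $$f(x)=\sum_{n=1}^\infty 2^{-n}\,\theta\big(e_n^*(x)-n\big).$$ Then $f$ is continuous and convex and is not constant on any line $\{x+tv:t\in\mathbb{R}\}$ with $v\neq0$, but there is no continuous linear form $\xi:Z\to\mathbb{R}$ such that $f-\xi$ attains a strict minimum, i.e. there are no $\xi\in Z^*$ and $x\in Z$ with $(f-\xi)(y)>(f-\xi)(x)$ for all $y\neq x$. *)

theory Defs
  imports "HOL-Analysis.Analysis"
begin

text \<open>The Hilbert space l2 is modelled as the carrier set of square-summable real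
sequences indexed by nat; index k corresponds to the paper's coordinate e_(k+1)^*.\<close>

definition l2 :: "(nat \<Rightarrow> real) set" where
  "l2 = {x. summable (\<lambda>n. (x n)\<^sup>2)}"

definition l2_norm :: "(nat \<Rightarrow> real) \<Rightarrow> real" where
  "l2_norm x = sqrt (\<Sum>n. (x n)\<^sup>2)"

definition theta :: "real \<Rightarrow> real" where
  "theta t = (if t \<le> 0 then 0 else t\<^sup>2)"

definition fex :: "(nat \<Rightarrow> real) \<Rightarrow> real" where
  "fex x = (\<Sum>k. (1/2) ^ (k+1) * theta (x k - real (k+1)))"

definition l2_continuous :: "((nat \<Rightarrow> real) \<Rightarrow> real) \<Rightarrow> bool" where
  "l2_continuous g \<longleftrightarrow> (\<forall>x\<in>l2. \<forall>e>0. \<exists>d>0. \<forall>y\<in>l2.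
      l2_norm (\<lambda>n. y n - x n) < d \<longrightarrow> \<bar>g y - g x\<bar> < e)"

definition l2_convex :: "((nat \<Rightarrow> real) \<Rightarrow> real) \<Rightarrow> bool" where
  "l2_convex g \<longleftrightarrow> (\<forall>x\<in>l2. \<forall>y\<in>l2. \<forall>u::real. 0 \<le> u \<and> u \<le> 1 \<longrightarrow>
      g (\<lambda>n. u * x n + (1 - u) * y n) \<le> u * g x + (1 - u) * g y)"

definition l2_dual :: "((nat \<Rightarrow> real) \<Rightarrow> real) set" where
  "l2_dual = {\<xi>. (\<forall>x\<in>l2. \<forall>y\<in>l2. \<xi> (\<lambda>n. x n + y n) = \<xi> x + \<xi> y)
      \<and> (\<forall>x\<in>l2. \<forall>c::real. \<xi> (\<lambda>n. c * x n) = c * \<xi> x)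
      \<and> (\<exists>C. \<forall>x\<in>l2. \<bar>\<xi> x\<bar> \<le> C * l2_norm x)}"

end

theory Submission
  imports Defs
begin

lemma term_le_suminf:
  fixes f :: "nat \<Rightarrow> real"
  assumes "summable f" "\<And>n. 0 \<le> f n"
  shows "f k \<le> suminf f"
  using sum_le_suminf[OF assms(1), of "{k}"] assms(2) by simp

lemma l2_lin:
  assumes "x \<in> l2" "y \<in> l2"
  shows "(\<lambda>n. a * x n + b * y n) \<in> l2"
proof -
  have sx: "summable (\<lambda>n. (x n)\<^sup>2)" and sy: "summable (\<lambda>n. (y n)\<^sup>2)"
    using assms by (auto simp: l2_def)
  have S: "summable (\<lambda>n. 2 * a\<^sup>2 * (x n)\<^sup>2 + 2 * b\<^sup>2 * (y n)\<^sup>2)"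
    using sx sy by (intro summable_add summable_mult) auto
  have B: "\<And>n. norm ((a * x n + b * y n)\<^sup>2) \<le> 2 * a\<^sup>2 * (x n)\<^sup>2 + 2 * b\<^sup>2 * (y n)\<^sup>2"
  proof -
    fix n
    have "0 \<le> (a * x n - b * y n)\<^sup>2" by simp
    moreover have "(a * x n + b * y n)\<^sup>2 + (a * x n - b * y n)\<^sup>2 = 2 * a\<^sup>2 * (x n)\<^sup>2 + 2 * b\<^sup>2 * (y n)\<^sup>2"
      by (simp add: power2_eq_square algebra_simps)
    ultimately show "norm ((a * x n + b * y n)\<^sup>2) \<le> 2 * a\<^sup>2 * (x n)\<^sup>2 + 2 * b\<^sup>2 * (y n)\<^sup>2"
      unfolding real_norm_def abs_of_nonneg[OF zero_le_power2] by linarith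
  qed
  show ?thesis unfolding l2_def mem_Collect_eq
    by (rule summable_comparison_test[OF _ S]) (use B in blast)
qed

lemma theta_nonneg: "0 \<le> theta t" by (simp add: theta_def)

lemma theta_le: "theta (a - c) \<le> a\<^sup>2" if "c \<ge> 0" for a c :: real
proof (cases "a - c \<le> 0")
  case True then show ?thesis by (simp add: theta_def)
next
  case False
  then have "(a - c)\<^sup>2 \<le> a\<^sup>2" using that by (intro power_mono) auto
  then show ?thesis using False by (simp add: theta_def)
qed

lemma fex_summable:
  assumes "x \<in> l2"
  shows "summable (\<lambda>k. (1/2) ^ (k+1) * theta (x k - real (k+1)))"
proof (rule summable_comparison_test[where g = "\<lambda>k. (x k)\<^sup>2"])
  show "summable (\<lambda>k. (x k)\<^sup>2)" using assms by (simp add: l2_def)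
  show "\<exists>N. \<forall>n\<ge>N. norm ((1/2) ^ (n+1) * theta (x n - real (n+1))) \<le> (x n)\<^sup>2"
  proof (intro exI allI impI)
    fix n :: nat
    have a: "(1/2::real) ^ (n+1) \<le> 1" by (rule power_le_one) auto
    have b: "theta (x n - real (n+1)) \<le> (x n)\<^sup>2" by (rule theta_le) simp
    have "(1/2::real) ^ (n+1) * theta (x n - real (n+1)) \<le> 1 * (x n)\<^sup>2"
      using a b theta_nonneg by (intro mult_mono) auto
    then show "norm ((1/2) ^ (n+1) * theta (x n - real (n+1))) \<le> (x n)\<^sup>2"
      using theta_nonneg by simp
  qed
qed

lemma theta_lip:
  "\<bar>theta b - theta a\<bar> \<le> \<bar>b - a\<bar> * (max a 0 + max b 0)"
proof -
  have t: "theta t = (max t 0)\<^sup>2" for t by (simp add: theta_def max_def)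
  have e: "(max b 0)\<^sup>2 - (max a 0)\<^sup>2 = (max b 0 - max a 0) * (max a 0 + max b 0)"
    by (simp add: power2_eq_square algebra_simps)
  have "\<bar>theta b - theta a\<bar> = \<bar>max b 0 - max a 0\<bar> * (max a 0 + max b 0)"
    unfolding t e abs_mult by simp
  also have "\<dots> \<le> \<bar>b - a\<bar> * (max a 0 + max b 0)"
    by (intro mult_right_mono) auto
  finally show ?thesis .
qed

lemma theta_convex:
  assumes "0 \<le> u" "u \<le> 1"
  shows "theta (u * a + (1 - u) * b) \<le> u * theta a + (1 - u) * theta b"
proof -
  have t: "theta t = (max t 0)\<^sup>2" for t by (simp add: theta_def max_def)
  define p where "p = max a 0"
  define q where "q = max b 0"
  have m: "max (u * a + (1 - u) * b) 0 \<le> u * p + (1 - u) * q"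
    using assms unfolding p_def q_def
    by (smt (verit) mult_left_mono mult_nonneg_nonneg)
  have "(max (u * a + (1 - u) * b) 0)\<^sup>2 \<le> (u * p + (1 - u) * q)\<^sup>2"
    using m by (intro power_mono) auto
  also have "\<dots> \<le> u * p\<^sup>2 + (1 - u) * q\<^sup>2"
  proof -
    have "0 \<le> u * (1 - u) * (p - q)\<^sup>2" using assms by simp
    then show ?thesis by (simp add: power2_eq_square algebra_simps)
  qed
  finally show ?thesis unfolding t p_def q_def .
qed

lemma coord_le_norm:
  assumes "x \<in> l2" shows "\<bar>x k\<bar> \<le> l2_norm x"
proof -
  have "(x k)\<^sup>2 \<le> (\<Sum>n. (x n)\<^sup>2)"
    using assms by (intro term_le_suminf[where f = "\<lambda>n. (x n)\<^sup>2"]) (auto simp: l2_def)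
  then show ?thesis unfolding l2_norm_def using real_le_rsqrt by (metis power2_abs)
qed

lemma fex_cont: "l2_continuous fex"
  unfolding l2_continuous_def
proof (intro ballI allI impI)
  fix x :: "nat \<Rightarrow> real" and e :: real
  assume x: "x \<in> l2" and e: "e > 0"
  define A where "A = l2_norm x"
  have A0: "A \<ge> 0" unfolding A_def l2_norm_def
    using x by (auto simp: l2_def intro!: suminf_nonneg)
  define d where "d = min 1 (e / (2 * A + 2))"
  have d0: "d > 0" using e A0 by (simp add: d_def)
  show "\<exists>d>0. \<forall>y\<in>l2. l2_norm (\<lambda>n. y n - x n) < d \<longrightarrow> \<bar>fex y - fex x\<bar> < e"
  proof (intro exI[of _ d] conjI ballI impI d0)
    fix y assume y: "y \<in> l2" and dl: "l2_norm (\<lambda>n. y n - x n) < d"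
    define \<delta> where "\<delta> = l2_norm (\<lambda>n. y n - x n)"
    have yx: "(\<lambda>n. y n - x n) \<in> l2"
      using l2_lin[OF y x, of 1 "-1"] by simp
    have dk: "\<bar>y k - x k\<bar> \<le> \<delta>" for k
      using coord_le_norm[OF yx, of k] by (simp add: \<delta>_def)
    have xk: "\<bar>x k\<bar> \<le> A" for k using coord_le_norm[OF x] by (simp add: A_def)
    have \<delta>0: "\<delta> \<ge> 0" using dk[of 0] by linarith
    define w where "w = (\<lambda>k::nat. (1/2::real) ^ (k+1))"
    have wsum: "w sums 1" unfolding w_def using power_half_series by simp
    have tk: "\<bar>theta (y k - real (k+1)) - theta (x k - real (k+1))\<bar> \<le> \<delta> * (2 * A + \<delta>)" for k
    proof -
      have "\<bar>theta (y k - real (k+1)) - theta (x k - real (k+1))\<bar>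
          \<le> \<bar>(y k - real (k+1)) - (x k - real (k+1))\<bar> * (max (x k - real (k+1)) 0 + max (y k - real (k+1)) 0)"
        by (rule theta_lip)
      also have "\<dots> \<le> \<delta> * (2 * A + \<delta>)"
      proof (rule mult_mono)
        show "\<bar>(y k - real (k+1)) - (x k - real (k+1))\<bar> \<le> \<delta>" using dk[of k] by simp
        show "max (x k - real (k+1)) 0 + max (y k - real (k+1)) 0 \<le> 2 * A + \<delta>"
          using xk[of k] dk[of k] by (auto simp: max_def abs_le_iff)
      qed (use \<delta>0 A0 in auto)
      finally show ?thesis .
    qed
    have w0: "w k \<ge> 0" for k by (simp add: w_def)
    have fw: "fex z = (\<Sum>k. w k * theta (z k - real (k+1)))" for z
      unfolding fex_def w_def by (rule refl)
    have sy: "summable (\<lambda>k. w k * theta (y k - real (k+1)))" using fex_summable[OF y] by (simp add: w_def)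
    have sx: "summable (\<lambda>k. w k * theta (x k - real (k+1)))" using fex_summable[OF x] by (simp add: w_def)
    have "fex y - fex x = (\<Sum>k. w k * theta (y k - real (k+1)) - w k * theta (x k - real (k+1)))"
      unfolding fw using suminf_diff[OF sy sx] by simp
    also have "\<bar>\<dots>\<bar> \<le> (\<Sum>k. w k * (\<delta> * (2 * A + \<delta>)))"
    proof -
      have "norm (\<Sum>k. w k * theta (y k - real (k+1)) - w k * theta (x k - real (k+1))) \<le> (\<Sum>k. w k * (\<delta> * (2 * A + \<delta>)))"
      proof (rule norm_suminf_le)
        fix k
        have "norm (w k * theta (y k - real (k+1)) - w k * theta (x k - real (k+1)))
           = w k * \<bar>theta (y k - real (k+1)) - theta (x k - real (k+1))\<bar>"
          unfolding right_diff_distrib[symmetric] real_norm_def abs_mult using w0[of k] by simp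
        also have "\<dots> \<le> w k * (\<delta> * (2 * A + \<delta>))"
          using tk[of k] by (intro mult_left_mono) (auto simp: w_def)
        finally show "norm (w k * theta (y k - real (k+1)) - w k * theta (x k - real (k+1))) \<le> w k * (\<delta> * (2 * A + \<delta>))" .
      qed (use wsum in \<open>auto intro: summable_mult2 sums_summable\<close>)
      then show ?thesis by simp
    qed
    also have "\<dots> = \<delta> * (2 * A + \<delta>)"
      using sums_unique[OF sums_mult2[OF wsum, of "\<delta> * (2 * A + \<delta>)"]] by simp
    also have "\<dots> < e"
    proof -
      have "\<delta> < d" using dl \<delta>_def by simp
      have "\<delta> * (2 * A + \<delta>) \<le> \<delta> * (2 * A + 1)"
        using \<open>\<delta> < d\<close> \<delta>0 by (intro mult_left_mono) (auto simp: d_def)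
      also have "\<dots> < d * (2 * A + 2)"
        using \<open>\<delta> < d\<close> \<delta>0 A0 d0 by (smt (verit) mult_strict_right_mono mult_left_mono)
      also have "\<dots> \<le> e / (2 * A + 2) * (2 * A + 2)"
        using A0 by (intro mult_right_mono) (auto simp: d_def)
      also have "\<dots> = e" using A0 by simp
      finally show ?thesis .
    qed
    finally show "\<bar>fex y - fex x\<bar> < e" .
  qed
qed


lemma fex_convex: "l2_convex fex"
  unfolding l2_convex_def
proof (intro ballI allI impI)
  fix x y :: "nat \<Rightarrow> real" and u :: real
  assume x: "x \<in> l2" and y: "y \<in> l2" and u: "0 \<le> u \<and> u \<le> 1"
  define w where "w = (\<lambda>k::nat. (1/2::real) ^ (k+1))"
  have w0: "w k \<ge> 0" for k by (simp add: w_def)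
  have fw: "fex z = (\<Sum>k. w k * theta (z k - real (k+1)))" for z
    unfolding fex_def w_def by (rule refl)
  have sm: "z \<in> l2 \<Longrightarrow> summable (\<lambda>k. w k * theta (z k - real (k+1)))" for z
    using fex_summable[of z] by (simp add: w_def)
  have m: "(\<lambda>n. u * x n + (1 - u) * y n) \<in> l2" by (rule l2_lin[OF x y])
  have "fex (\<lambda>n. u * x n + (1 - u) * y n)
      \<le> (\<Sum>k. u * (w k * theta (x k - real (k+1))) + (1 - u) * (w k * theta (y k - real (k+1))))"
    unfolding fw
  proof (rule suminf_le)
    fix k
    have "theta (u * x k + (1 - u) * y k - real (k+1))
        = theta (u * (x k - real (k+1)) + (1 - u) * (y k - real (k+1)))"
      by (simp add: algebra_simps)
    also have "\<dots> \<le> u * theta (x k - real (k+1)) + (1 - u) * theta (y k - real (k+1))"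
      using u by (intro theta_convex) auto
    finally have "w k * theta (u * x k + (1 - u) * y k - real (k+1))
        \<le> w k * (u * theta (x k - real (k+1)) + (1 - u) * theta (y k - real (k+1)))"
      using w0[of k] by (intro mult_left_mono) auto
    then show "w k * theta (u * x k + (1 - u) * y k - real (k+1))
        \<le> u * (w k * theta (x k - real (k+1))) + (1 - u) * (w k * theta (y k - real (k+1)))"
      by (simp add: algebra_simps)
  next
    show "summable (\<lambda>k. w k * theta (u * x k + (1 - u) * y k - real (k+1)))"
      using sm[OF m] by simp
    show "summable (\<lambda>k. u * (w k * theta (x k - real (k+1))) + (1 - u) * (w k * theta (y k - real (k+1))))"
      using sm[OF x] sm[OF y] by (intro summable_add summable_mult)
  qed
  also have "\<dots> = u * fex x + (1 - u) * fex y"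
    unfolding fw using sm[OF x] sm[OF y]
    by (subst suminf_add[symmetric]) (auto intro: summable_mult simp: suminf_mult)
  finally show "fex (\<lambda>n. u * x n + (1 - u) * y n) \<le> u * fex x + (1 - u) * fex y" .
qed

lemma fex_nonconst:
  assumes x: "x \<in> l2" and v: "v \<in> l2" and v0: "v \<noteq> (\<lambda>n. 0)"
  shows "\<exists>t::real. fex (\<lambda>n. x n + t * v n) \<noteq> fex x"
proof -
  obtain m where vm: "v m \<noteq> 0" using v0 by auto
  define s where "s = fex x * 2 ^ (m+1) + 1"
  have fx0: "fex x \<ge> 0" unfolding fex_def
    using fex_summable[OF x] by (intro suminf_nonneg) (auto intro!: mult_nonneg_nonneg theta_nonneg)
  have s1: "s \<ge> 1" using fx0 by (simp add: s_def)
  define t where "t = (real (m+1) - x m + s) / v m"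
  have xt: "(\<lambda>n. x n + t * v n) \<in> l2" using l2_lin[OF x v, of 1 t] by simp
  have arg: "x m + t * v m - real (m+1) = s" using vm by (simp add: t_def)
  have "fex x * 2 ^ (m+1) < s" by (simp add: s_def)
  also have "s \<le> s\<^sup>2" using s1 by (simp add: power2_eq_square)
  also have "\<dots> = theta (x m + t * v m - real (m+1))" using arg s1 by (simp add: theta_def)
  finally have "fex x < (1/2) ^ (m+1) * theta (x m + t * v m - real (m+1))"
    by (simp add: field_simps)
  also have "\<dots> \<le> fex (\<lambda>n. x n + t * v n)"
    unfolding fex_def
    by (rule term_le_suminf[where f = "\<lambda>k. (1/2) ^ (k+1) * theta (x k + t * v k - real (k+1))"])
       (use fex_summable[OF xt] in \<open>auto intro!: mult_nonneg_nonneg theta_nonneg\<close>)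
  finally show ?thesis by (intro exI[of _ t]) simp
qed

lemma fex_nomin:
  "\<not> (\<exists>\<xi>\<in>l2_dual. \<exists>x\<in>l2. \<forall>y\<in>l2. y \<noteq> x \<longrightarrow> fex y - \<xi> y > fex x - \<xi> x)"
proof
  assume "\<exists>\<xi>\<in>l2_dual. \<exists>x\<in>l2. \<forall>y\<in>l2. y \<noteq> x \<longrightarrow> fex y - \<xi> y > fex x - \<xi> x"
  then obtain \<xi> x where xi: "\<xi> \<in> l2_dual" and x: "x \<in> l2"
    and min: "\<And>y. y \<in> l2 \<Longrightarrow> y \<noteq> x \<Longrightarrow> fex y - \<xi> y > fex x - \<xi> x" by blast
  have add: "\<And>a b. a \<in> l2 \<Longrightarrow> b \<in> l2 \<Longrightarrow> \<xi> (\<lambda>n. a n + b n) = \<xi> a + \<xi> b"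
    and hom: "\<And>a c. a \<in> l2 \<Longrightarrow> \<xi> (\<lambda>n. c * a n) = c * \<xi> a"
    using xi by (auto simp: l2_dual_def)
  obtain k where k: "x k \<le> real k"
  proof (rule ccontr)
    assume "\<not> thesis"
    then have gt: "x k > real k" for k using that not_le by blast
    have "(\<lambda>n. (x n)\<^sup>2) \<longlonglongrightarrow> 0" using x unfolding l2_def by (intro summable_LIMSEQ_zero) simp
    then obtain N where "\<forall>n\<ge>N. norm ((x n)\<^sup>2 - 0) < 1"
      using LIMSEQ_D[of "\<lambda>n. (x n)\<^sup>2" 0 1] by auto
    then have "(x (N+1))\<^sup>2 < 1" by (metis le_add1 real_norm_def abs_of_nonneg zero_le_power2 diff_zero)
    moreover have "1 \<le> (x (N+1))\<^sup>2"
    proof -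
      have "1 \<le> x (N+1)" using gt[of "N+1"] by simp
      then show ?thesis by (metis one_le_power)
    qed
    ultimately show False by simp
  qed
  define e where "e = (\<lambda>n::nat. if n = k then 1 else (0::real))"
  have e: "e \<in> l2" unfolding l2_def
    by (simp, rule summable_finite[of "{k}"]) (auto simp: e_def)
  define y1 where "y1 = (\<lambda>n. 1 * x n + 1 * e n)"
  define y2 where "y2 = (\<lambda>n. 1 * x n + (-1) * e n)"
  have y1: "y1 \<in> l2" and y2: "y2 \<in> l2" unfolding y1_def y2_def
    using l2_lin[OF x e, of 1 1] l2_lin[OF x e, of 1 "-1"] by (simp_all del: mult_1 mult_minus1)
  have ne1: "y1 \<noteq> x" unfolding y1_def e_def by (auto dest: fun_cong[of _ _ k])
  have ne2: "y2 \<noteq> x" unfolding y2_def e_def by (auto dest: fun_cong[of _ _ k])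
  have f1: "fex y1 = fex x" unfolding fex_def y1_def e_def
    by (intro arg_cong[where f = suminf] ext) (use k in \<open>auto simp: theta_def\<close>)
  have f2: "fex y2 = fex x" unfolding fex_def y2_def e_def
    by (intro arg_cong[where f = suminf] ext) (use k in \<open>auto simp: theta_def\<close>)
  have "\<xi> y1 < \<xi> x" using min[OF y1 ne1] f1 by simp
  moreover have "\<xi> y2 < \<xi> x" using min[OF y2 ne2] f2 by simp
  moreover have "\<xi> y1 + \<xi> y2 = 2 * \<xi> x"
  proof -
    have "(\<lambda>n. y1 n + y2 n) = (\<lambda>n. 2 * x n)" by (auto simp: y1_def y2_def)
    then show ?thesis using add[OF y1 y2] hom[OF x, of 2] by simp
  qed
  ultimately show False by simp
qed

theorem mainTheorem10:
  shows "l2_continuous fex \<and> l2_convex fex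
    \<and> (\<forall>x\<in>l2. \<forall>v\<in>l2. v \<noteq> (\<lambda>n. 0) \<longrightarrow> (\<exists>t::real. fex (\<lambda>n. x n + t * v n) \<noteq> fex x))
    \<and> \<not> (\<exists>\<xi>\<in>l2_dual. \<exists>x\<in>l2. \<forall>y\<in>l2. y \<noteq> x \<longrightarrow> fex y - \<xi> y > fex x - \<xi> x)"
  using fex_cont fex_convex fex_nonconst fex_nomin by blast

end
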